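(* Let $\mathcal{X}$ be a set of feasible solutions and $f_1,\dots,f_m:\mathcal{X}\to\mathbb{R}$ objective functions, $\boldsymbol{f}=(f_1,\dots,f_m)$. Fix an integer $K\ge1$, a preference vector $\boldsymbol{\lambda}$ with $\lambda_i\ge0$, $\sum_{i=1}^m\lambda_i=1$, an ideal point $\boldsymbol{z}^*\in\mathbb{R}^m$, and smoothing parameters $\mu>0$, $\mu_1,\dots,\mu_m>0$. For $X_K=\{\boldsymbol{x}^{(1)},\dots,\boldsymbol{x}^{(K)}\}\subseteq\mathcal{X}$ define the smooth Tchebycheff set scalarization $$g^{(\mathrm{STCH\text{-}Set})}_{\mu,\{\mu_i\}}(X_K\mid\boldsymbol{\lambda})=\mu\log\left(\sum_{i=1}^m\exp\left(\frac{\lambda_i\left(-\mu_i\log\left(\sum_{k=1}^K e^{-f_i(\boldsymbol{x}^{(k)})/\mu_i}\right)-z_i^*\right)}{\mu}\right)\right).$$ Let $X^*_K$ be an optimal solution set, i.e. a minimizer of $g^{(\mathrm{STCH\text{-}Set})}_{\mu,\{\mu_i\}}(\cdot\mid\boldsymbol{\lambda})$ over all sets of $K$ solutions in $\mathcal{X}$. Then every solution in $X^*_K$ is weakly Pareto optimal for $\min_{\boldsymbol{x}\in\mathcal{X}}\boldsymbol{f}(\boldsymbol{x})$. In addition, every solution in $X^*_K$ is Pareto optimal for $\min_{\boldsymbol{x}\in\mathcal{X}}\boldsymbol{f}(\boldsymbol{x})$ if either (1) the optimal solution set $X^*_K$ is unique, or (2) all preference coefficients are positive ($\lambda_i>0$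 for all $i$).
   Context: $\boldsymbol{x}^{(a)}$ dominates $\boldsymbol{x}^{(b)}$ if $f_i(\boldsymbol{x}^{(a)})\le f_i(\boldsymbol{x}^{(b)})$ for all $i$ and $f_j(\boldsymbol{x}^{(a)})<f_j(\boldsymbol{x}^{(b)})$ for some $j$; $\boldsymbol{x}^{(a)}$ strictly dominates $\boldsymbol{x}^{(b)}$ if $f_i(\boldsymbol{x}^{(a)})<f_i(\boldsymbol{x}^{(b)})$ for all $i$. A solution $\boldsymbol{x}^*\in\mathcal{X}$ is Pareto optimal if no $\boldsymbol{x}\in\mathcal{X}$ dominates it, and weakly Pareto optimal if no $\boldsymbol{x}\in\mathcal{X}$ strictly dominates it. *)

theory Defs
  imports Complex_Main
begin

definition dominates :: "nat \<Rightarrow> (nat \<Rightarrow> 'a \<Rightarrow> real) \<Rightarrow> 'a \<Rightarrow> 'a \<Rightarrow> bool" where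
  "dominates m f xa xb \<longleftrightarrow>
     (\<forall>i\<in>{1..m}. f i xa \<le> f i xb) \<and> (\<exists>j\<in>{1..m}. f j xa < f j xb)"

definition strictly_dominates :: "nat \<Rightarrow> (nat \<Rightarrow> 'a \<Rightarrow> real) \<Rightarrow> 'a \<Rightarrow> 'a \<Rightarrow> bool" where
  "strictly_dominates m f xa xb \<longleftrightarrow> (\<forall>i\<in>{1..m}. f i xa < f i xb)"

definition pareto_optimal :: "'a set \<Rightarrow> nat \<Rightarrow> (nat \<Rightarrow> 'a \<Rightarrow> real) \<Rightarrow> 'a \<Rightarrow> bool" where
  "pareto_optimal X m f x \<longleftrightarrow> x \<in> X \<and> \<not> (\<exists>y\<in>X. dominates m f y x)"

definition weakly_pareto_optimal :: "'a set \<Rightarrow> nat \<Rightarrow> (nat \<Rightarrow> 'a \<Rightarrow> real) \<Rightarrow> 'a \<Rightarrow> bool" where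
  "weakly_pareto_optimal X m f x \<longleftrightarrow> x \<in> X \<and> \<not> (\<exists>y\<in>X. strictly_dominates m f y x)"

definition stch_set ::
  "nat \<Rightarrow> nat \<Rightarrow> (nat \<Rightarrow> 'a \<Rightarrow> real) \<Rightarrow> (nat \<Rightarrow> real) \<Rightarrow> (nat \<Rightarrow> real) \<Rightarrow> real
   \<Rightarrow> (nat \<Rightarrow> real) \<Rightarrow> (nat \<Rightarrow> 'a) \<Rightarrow> real" where
  "stch_set m K f lam z mu mus xs =
     mu * ln (\<Sum>i=1..m. exp (lam i * (- mus i * ln (\<Sum>k=1..K. exp (- f i (xs k) / mus i)) - z i) / mu))"

end

theory Submission
  imports Defs
begin

definition inner_s :: "nat \<Rightarrow> (nat \<Rightarrow> 'a \<Rightarrow> real) \<Rightarrow> (nat \<Rightarrow> real) \<Rightarrow> (nat \<Rightarrow> 'a) \<Rightarrow> nat \<Rightarrow> real" where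
  "inner_s K f mus xs i = (\<Sum>k=1..K. exp (- f i (xs k) / mus i))"

definition term_t where
  "term_t K f lam z mu mus xs i = lam i * (- mus i * ln (inner_s K f mus xs i) - z i) / mu"

lemma stch_alt: "stch_set m K f lam z mu mus xs = mu * ln (\<Sum>i=1..m. exp (term_t K f lam z mu mus xs i))"
  unfolding stch_set_def term_t_def inner_s_def by simp

lemma inner_pos: "K \<ge> 1 \<Longrightarrow> inner_s K f mus xs i > 0"
  unfolding inner_s_def by (intro sum_pos) auto

lemma inner_mono:
  assumes "mus i > 0" "\<forall>k\<in>{1..K}. f i (ys k) \<le> f i (xs k)"
  shows "inner_s K f mus xs i \<le> inner_s K f mus ys i"
  unfolding inner_s_def
proof (rule sum_mono)
  fix k assume "k \<in> {1..K}"
  with assms have "- f i (xs k) / mus i \<le> - f i (ys k) / mus i"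
    by (simp add: divide_right_mono)
  then show "exp (- f i (xs k) / mus i) \<le> exp (- f i (ys k) / mus i)" by simp
qed

lemma inner_strict:
  assumes "mus i > 0" "\<forall>k\<in>{1..K}. f i (ys k) \<le> f i (xs k)" "k0 \<in> {1..K}" "f i (ys k0) < f i (xs k0)"
  shows "inner_s K f mus xs i < inner_s K f mus ys i"
  unfolding inner_s_def
proof (rule sum_strict_mono_ex1)
  show "finite {1..K}" by simp
  show "\<forall>k\<in>{1..K}. exp (- f i (xs k) / mus i) \<le> exp (- f i (ys k) / mus i)"
  proof
    fix k assume "k \<in> {1..K}"
    with assms have "- f i (xs k) / mus i \<le> - f i (ys k) / mus i"
      by (simp add: divide_right_mono)
    then show "exp (- f i (xs k) / mus i) \<le> exp (- f i (ys k) / mus i)" by simp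
  qed
  have "- f i (xs k0) / mus i < - f i (ys k0) / mus i"
    using assms by (simp add: divide_strict_right_mono)
  then show "\<exists>k\<in>{1..K}. exp (- f i (xs k) / mus i) < exp (- f i (ys k) / mus i)"
    using assms(3) by auto
qed

lemma term_mono:
  assumes "K \<ge> 1" "mu > 0" "lam i \<ge> 0" "mus i > 0" "\<forall>k\<in>{1..K}. f i (ys k) \<le> f i (xs k)"
  shows "term_t K f lam z mu mus ys i \<le> term_t K f lam z mu mus xs i"
proof -
  have "ln (inner_s K f mus xs i) \<le> ln (inner_s K f mus ys i)"
    using inner_mono[where K=K and f=f and i=i and mus=mus and ys=ys and xs=xs, OF assms(4,5)] inner_pos[OF assms(1), of f mus xs i] by simp
  then have "- mus i * ln (inner_s K f mus ys i) - z i \<le> - mus i * ln (inner_s K f mus xs i) - z i"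
    using assms(4) by (simp add: mult_left_mono)
  then have "lam i * (- mus i * ln (inner_s K f mus ys i) - z i) \<le> lam i * (- mus i * ln (inner_s K f mus xs i) - z i)"
    using assms(3) by (simp add: mult_left_mono)
  then show ?thesis unfolding term_t_def using assms(2) by (simp add: divide_right_mono)
qed

lemma term_strict:
  assumes "K \<ge> 1" "mu > 0" "lam i > 0" "mus i > 0" "\<forall>k\<in>{1..K}. f i (ys k) \<le> f i (xs k)"
    "k0 \<in> {1..K}" "f i (ys k0) < f i (xs k0)"
  shows "term_t K f lam z mu mus ys i < term_t K f lam z mu mus xs i"
proof -
  have "ln (inner_s K f mus xs i) < ln (inner_s K f mus ys i)"
    using inner_strict[where K=K and f=f and i=i and mus=mus and ys=ys and xs=xs, OF assms(4,5,6,7)] inner_pos[OF assms(1), of f mus xs i] by simp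
  then have "- mus i * ln (inner_s K f mus ys i) - z i < - mus i * ln (inner_s K f mus xs i) - z i"
    using assms(4) by simp
  then have "lam i * (- mus i * ln (inner_s K f mus ys i) - z i) < lam i * (- mus i * ln (inner_s K f mus xs i) - z i)"
    using assms(3) by simp
  then show ?thesis unfolding term_t_def using assms(2) by (simp add: divide_strict_right_mono)
qed

lemma stch_mono:
  assumes "K \<ge> 1" "mu > 0" "\<forall>i\<in>{1..m}. lam i \<ge> 0" "\<forall>i\<in>{1..m}. mus i > 0"
    "\<forall>i\<in>{1..m}. \<forall>k\<in>{1..K}. f i (ys k) \<le> f i (xs k)"
  shows "stch_set m K f lam z mu mus ys \<le> stch_set m K f lam z mu mus xs"
proof (cases "m = 0")
  case True then show ?thesis by (simp add: stch_set_def)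
next
  case False
  have le: "(\<Sum>i=1..m. exp (term_t K f lam z mu mus ys i)) \<le> (\<Sum>i=1..m. exp (term_t K f lam z mu mus xs i))"
  proof (rule sum_mono)
    fix i assume "i \<in> {1..m}"
    then show "exp (term_t K f lam z mu mus ys i) \<le> exp (term_t K f lam z mu mus xs i)"
      using assms term_mono[of K mu lam i mus f ys xs z] by auto
  qed
  have pos: "(\<Sum>i=1..m. exp (term_t K f lam z mu mus ys i)) > 0"
    using False by (intro sum_pos) auto
  show ?thesis unfolding stch_alt using le pos assms(2) by (simp add: mult_left_mono)
qed

lemma stch_strict:
  assumes "K \<ge> 1" "mu > 0" "\<forall>i\<in>{1..m}. lam i \<ge> 0" "\<forall>i\<in>{1..m}. mus i > 0"
    "\<forall>i\<in>{1..m}. \<forall>k\<in>{1..K}. f i (ys k) \<le> f i (xs k)"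
    "i0 \<in> {1..m}" "lam i0 > 0" "k0 \<in> {1..K}" "f i0 (ys k0) < f i0 (xs k0)"
  shows "stch_set m K f lam z mu mus ys < stch_set m K f lam z mu mus xs"
proof -
  have lt: "(\<Sum>i=1..m. exp (term_t K f lam z mu mus ys i)) < (\<Sum>i=1..m. exp (term_t K f lam z mu mus xs i))"
  proof (rule sum_strict_mono_ex1)
    show "finite {1..m}" by simp
    show "\<forall>i\<in>{1..m}. exp (term_t K f lam z mu mus ys i) \<le> exp (term_t K f lam z mu mus xs i)"
      using assms term_mono[of K mu lam _ mus f ys xs z] by auto
    show "\<exists>i\<in>{1..m}. exp (term_t K f lam z mu mus ys i) < exp (term_t K f lam z mu mus xs i)"
      using assms term_strict[of K mu lam i0 mus f ys xs k0 z] by auto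
  qed
  have pos: "(\<Sum>i=1..m. exp (term_t K f lam z mu mus ys i)) > 0"
    using assms(6) by (intro sum_pos) auto
  show ?thesis unfolding stch_alt using lt pos assms(2) by simp
qed

theorem theorem2:
  fixes X :: "'a set" and m K :: nat and f :: "nat \<Rightarrow> 'a \<Rightarrow> real"
    and lam z mus :: "nat \<Rightarrow> real" and mu :: real and xs :: "nat \<Rightarrow> 'a"
  assumes K: "K \<ge> 1"
    and lam_nonneg: "\<forall>i\<in>{1..m}. lam i \<ge> 0"
    and lam_sum: "(\<Sum>i=1..m. lam i) = 1"
    and mu_pos: "mu > 0"
    and mus_pos: "\<forall>i\<in>{1..m}. mus i > 0"
    and feasible: "\<forall>k\<in>{1..K}. xs k \<in> X"
    and optimal: "\<forall>ys. (\<forall>k\<in>{1..K}. ys k \<in> X) \<longrightarrow>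
                    stch_set m K f lam z mu mus xs \<le> stch_set m K f lam z mu mus ys"
  shows "(\<forall>k\<in>{1..K}. weakly_pareto_optimal X m f (xs k))
       \<and> (((\<forall>ys. (\<forall>k\<in>{1..K}. ys k \<in> X)
                 \<and> (\<forall>ws. (\<forall>k\<in>{1..K}. ws k \<in> X) \<longrightarrow>
                        stch_set m K f lam z mu mus ys \<le> stch_set m K f lam z mu mus ws)
                 \<longrightarrow> ys ` {1..K} = xs ` {1..K})
           \<or> (\<forall>i\<in>{1..m}. lam i > 0))
          \<longrightarrow> (\<forall>k\<in>{1..K}. pareto_optimal X m f (xs k)))"
proof (intro conjI impI ballI)
  obtain i0 where i0: "i0 \<in> {1..m}" "lam i0 > 0"
  proof (rule ccontr)
    assume "\<not> thesis"
    then have "\<forall>i\<in>{1..m}. lam i = 0" using lam_nonneg that by force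
    then have "(\<Sum>i=1..m. lam i) = 0" by simp
    with lam_sum show False by simp
  qed
  fix k assume k: "k \<in> {1..K}"
  show "weakly_pareto_optimal X m f (xs k)"
    unfolding weakly_pareto_optimal_def
  proof (intro conjI notI)
    show "xs k \<in> X" using feasible k by auto
    assume "\<exists>y\<in>X. strictly_dominates m f y (xs k)"
    then obtain y where y: "y \<in> X" "\<forall>i\<in>{1..m}. f i y < f i (xs k)"
      unfolding strictly_dominates_def by auto
    define ys where "ys = xs(k := y)"
    have fe: "\<forall>k'\<in>{1..K}. ys k' \<in> X" using feasible y unfolding ys_def by auto
    have "stch_set m K f lam z mu mus ys < stch_set m K f lam z mu mus xs"
      by (rule stch_strict[OF K mu_pos lam_nonneg mus_pos _ i0 k])
        (use y i0 in \<open>auto simp: ys_def less_imp_le\<close>)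
    with optimal fe show False by force
  qed
next
  fix k assume k: "k \<in> {1..K}"
  assume H: "(\<forall>ys. (\<forall>k\<in>{1..K}. ys k \<in> X)
                 \<and> (\<forall>ws. (\<forall>k\<in>{1..K}. ws k \<in> X) \<longrightarrow>
                        stch_set m K f lam z mu mus ys \<le> stch_set m K f lam z mu mus ws)
                 \<longrightarrow> ys ` {1..K} = xs ` {1..K})
           \<or> (\<forall>i\<in>{1..m}. lam i > 0)"
  show "pareto_optimal X m f (xs k)"
    unfolding pareto_optimal_def
  proof (intro conjI notI)
    show "xs k \<in> X" using feasible k by auto
    assume "\<exists>y\<in>X. dominates m f y (xs k)"
    then obtain y j where y: "y \<in> X" "\<forall>i\<in>{1..m}. f i y \<le> f i (xs k)"
      and j: "j \<in> {1..m}" "f j y < f j (xs k)"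
      unfolding dominates_def by auto
    from H show False
    proof
      assume U: "\<forall>ys. (\<forall>k\<in>{1..K}. ys k \<in> X)
                 \<and> (\<forall>ws. (\<forall>k\<in>{1..K}. ws k \<in> X) \<longrightarrow>
                        stch_set m K f lam z mu mus ys \<le> stch_set m K f lam z mu mus ws)
                 \<longrightarrow> ys ` {1..K} = xs ` {1..K}"
      define ys where "ys = (\<lambda>k'. if xs k' = xs k then y else xs k')"
      have fe: "\<forall>k'\<in>{1..K}. ys k' \<in> X" using feasible y unfolding ys_def by auto
      have "stch_set m K f lam z mu mus ys \<le> stch_set m K f lam z mu mus xs"
        by (rule stch_mono[OF K mu_pos lam_nonneg mus_pos]) (use y in \<open>auto simp: ys_def\<close>)
      then have "\<forall>ws. (\<forall>k\<in>{1..K}. ws k \<in> X) \<longrightarrow>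
                        stch_set m K f lam z mu mus ys \<le> stch_set m K f lam z mu mus ws"
        using optimal by force
      with U fe have eq: "ys ` {1..K} = xs ` {1..K}" by blast
      have "xs k \<in> ys ` {1..K}" using k eq by auto
      then obtain k' where "ys k' = xs k" by auto
      moreover have "y \<noteq> xs k" using j by auto
      ultimately show False unfolding ys_def by (auto split: if_splits)
    next
      assume P: "\<forall>i\<in>{1..m}. lam i > 0"
      define ys where "ys = xs(k := y)"
      have fe: "\<forall>k'\<in>{1..K}. ys k' \<in> X" using feasible y unfolding ys_def by auto
      have "stch_set m K f lam z mu mus ys < stch_set m K f lam z mu mus xs"
        by (rule stch_strict[OF K mu_pos lam_nonneg mus_pos _ j(1) _ k])
          (use y j P in \<open>auto simp: ys_def\<close>)
      with optimal fe show False by force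
    qed
  qed
qed

end
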